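(* Let $\mathfrak{l}$ be a finite-dimensional restricted Lie algebra over an algebraically closed field $\mathbb{K}$ of characteristic $p$ which is perfect, i.e. $[\mathfrak{l},\mathfrak{l}]=\mathfrak{l}$, and let $\chi\in\mathfrak{l}^\ast$. Let $\mathfrak{l}_\chi=\mathfrak{l}\oplus\mathbb{K}c$ be the restricted Lie algebra with bracket $[a+\alpha c,b+\beta c]=[a,b]$ and $p$-map $(a+\alpha c)^{[p]}=a^{[p]}+(\chi(a)^p+\alpha^p)c$. Then the central extension of restricted Lie algebras $0\to\mathbb{K}c\to\mathfrak{l}_\chi\to\mathfrak{l}\to0$ is split (i.e. there is a restricted Lie algebra homomorphism $s:\mathfrak{l}\to\mathfrak{l}_\chi$ right inverse to the projection) if and only if $\chi=0$. *)

theory Defs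
  imports "HOL-Computational_Algebra.Polynomial" "HOL-Library.Product_Plus"
begin

definition lie_algebra ::
  "('k::field \<Rightarrow> 'v::ab_group_add \<Rightarrow> 'v) \<Rightarrow> ('v \<Rightarrow> 'v \<Rightarrow> 'v) \<Rightarrow> bool" where
  "lie_algebra scale br \<longleftrightarrow>
     vector_space scale \<and>
     (\<forall>x. Vector_Spaces.linear scale scale (br x)) \<and>
     (\<forall>y. Vector_Spaces.linear scale scale (\<lambda>x. br x y)) \<and>
     (\<forall>x. br x x = 0) \<and>
     (\<forall>x y z. br x (br y z) + br y (br z x) + br z (br x y) = 0)"

text \<open>Jacobson's universal Lie polynomials: i * s_i(x,y) is the coefficient of
t^(i-1) in ad(t x + y)^(p-1) (x), i.e. the sum over all words in x,y of
length p-1 containing exactly i-1 letters x.\<close>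

definition ad_word :: "('v \<Rightarrow> 'v \<Rightarrow> 'v) \<Rightarrow> 'v \<Rightarrow> 'v \<Rightarrow> bool list \<Rightarrow> 'v \<Rightarrow> 'v" where
  "ad_word br x y bs v = foldr (\<lambda>b w. br (if b then x else y) w) bs v"

definition jacobson_s ::
  "('k::field \<Rightarrow> 'v::ab_group_add \<Rightarrow> 'v) \<Rightarrow> ('v \<Rightarrow> 'v \<Rightarrow> 'v) \<Rightarrow> nat \<Rightarrow> nat \<Rightarrow> 'v \<Rightarrow> 'v \<Rightarrow> 'v" where
  "jacobson_s scale br p i x y =
     scale (inverse (of_nat i))
       (\<Sum>bs\<in>{bs. length bs = p - 1 \<and> length (filter id bs) = i - 1}. ad_word br x y bs x)"

definition restricted_lie_algebra ::
  "('k::field \<Rightarrow> 'v::ab_group_add \<Rightarrow> 'v) \<Rightarrow> ('v \<Rightarrow> 'v \<Rightarrow> 'v) \<Rightarrow> ('v \<Rightarrow> 'v) \<Rightarrow> nat \<Rightarrow> bool" where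
  "restricted_lie_algebra scale br pm p \<longleftrightarrow>
     lie_algebra scale br \<and>
     (\<forall>a x. pm (scale a x) = scale (a ^ p) (pm x)) \<and>
     (\<forall>x. br (pm x) = (br x ^^ p)) \<and>
     (\<forall>x y. pm (x + y) = pm x + pm y + (\<Sum>i\<in>{1..p-1}. jacobson_s scale br p i x y))"

definition finite_dim_space :: "('k::field \<Rightarrow> 'v::ab_group_add \<Rightarrow> 'v) \<Rightarrow> bool" where
  "finite_dim_space scale \<longleftrightarrow> (\<exists>B. finite_dimensional_vector_space scale B)"

definition perfect_lie :: "('k::field \<Rightarrow> 'v::ab_group_add \<Rightarrow> 'v) \<Rightarrow> ('v \<Rightarrow> 'v \<Rightarrow> 'v) \<Rightarrow> bool" where
  "perfect_lie scale br \<longleftrightarrow> module.span scale {br a b | a b. True} = UNIV"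

definition restricted_lie_hom ::
  "('k::field \<Rightarrow> 'v::ab_group_add \<Rightarrow> 'v) \<Rightarrow> ('v \<Rightarrow> 'v \<Rightarrow> 'v) \<Rightarrow> ('v \<Rightarrow> 'v) \<Rightarrow>
   ('k \<Rightarrow> 'w::ab_group_add \<Rightarrow> 'w) \<Rightarrow> ('w \<Rightarrow> 'w \<Rightarrow> 'w) \<Rightarrow> ('w \<Rightarrow> 'w) \<Rightarrow> ('v \<Rightarrow> 'w) \<Rightarrow> bool" where
  "restricted_lie_hom scale1 br1 pm1 scale2 br2 pm2 f \<longleftrightarrow>
     Vector_Spaces.linear scale1 scale2 f \<and>
     (\<forall>a b. f (br1 a b) = br2 (f a) (f b)) \<and>
     (\<forall>a. f (pm1 a) = pm2 (f a))"

text \<open>The extension l_chi = l \<oplus> K c, modelled as 'v \<times> 'k, (a, alpha) = a + alpha c.\<close>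

definition ext_scale :: "('k::field \<Rightarrow> 'v \<Rightarrow> 'v) \<Rightarrow> 'k \<Rightarrow> 'v \<times> 'k \<Rightarrow> 'v \<times> 'k" where
  "ext_scale scale t u = (scale t (fst u), t * snd u)"

definition ext_br :: "('v \<Rightarrow> 'v \<Rightarrow> 'v) \<Rightarrow> 'v \<times> 'k::field \<Rightarrow> 'v \<times> 'k \<Rightarrow> 'v \<times> 'k" where
  "ext_br br u w = (br (fst u) (fst w), 0)"

definition ext_pm :: "('v \<Rightarrow> 'v) \<Rightarrow> ('v \<Rightarrow> 'k::field) \<Rightarrow> nat \<Rightarrow> 'v \<times> 'k \<Rightarrow> 'v \<times> 'k" where
  "ext_pm pm \<chi> p u = (pm (fst u), \<chi> (fst u) ^ p + snd u ^ p)"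

end

theory Submission
  imports Defs
begin

lemma vs_ext:
  assumes "vector_space (scale :: 'k::field \<Rightarrow> 'v::ab_group_add \<Rightarrow> 'v)"
  shows "vector_space (ext_scale scale)"
  using assms unfolding vector_space_def ext_scale_def
  by (auto simp: algebra_simps)

lemma lin_add:
  assumes "Vector_Spaces.linear s1 s2 f"
  shows "f (a + b) = f a + f b" "f (s1 c a) = s2 c (f a)"
  using assms unfolding Vector_Spaces.linear_def module_hom_def module_hom_axioms_def
  by auto

theorem corollary1p2p9:
  fixes scale :: "'k::alg_closed_field \<Rightarrow> 'v::ab_group_add \<Rightarrow> 'v"
    and br :: "'v \<Rightarrow> 'v \<Rightarrow> 'v"
    and pm :: "'v \<Rightarrow> 'v"
    and p :: nat
    and \<chi> :: "'v \<Rightarrow> 'k"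
  assumes "prime p" and "CHAR('k) = p"
    and "restricted_lie_algebra scale br pm p"
    and "finite_dim_space scale"
    and "perfect_lie scale br"
    and "Vector_Spaces.linear scale (*) \<chi>"
  shows "(\<exists>s. restricted_lie_hom scale br pm (ext_scale scale) (ext_br br) (ext_pm pm \<chi> p) s
              \<and> (\<forall>a. fst (s a) = a))
         \<longleftrightarrow> \<chi> = (\<lambda>_. 0)"
proof -
  have vs: "vector_space scale" using assms(3)
    unfolding restricted_lie_algebra_def lie_algebra_def by auto
  then interpret V: vector_space scale .
  have p0: "p > 0" using assms(1) prime_gt_0_nat by blast
  show ?thesis
  proof
    assume "\<exists>s. restricted_lie_hom scale br pm (ext_scale scale) (ext_br br) (ext_pm pm \<chi> p) s
              \<and> (\<forall>a. fst (s a) = a)"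
    then obtain s where hom: "restricted_lie_hom scale br pm (ext_scale scale) (ext_br br) (ext_pm pm \<chi> p) s"
      and fs: "\<forall>a. fst (s a) = a" by blast
    have lin: "Vector_Spaces.linear scale (ext_scale scale) s"
      and hb: "\<And>a b. s (br a b) = ext_br br (s a) (s b)"
      and hp: "\<And>a. s (pm a) = ext_pm pm \<chi> p (s a)"
      using hom unfolding restricted_lie_hom_def by auto
    let ?T = "{x. snd (s x) = 0}"
    have sub: "V.subspace ?T"
    proof (rule V.subspaceI)
      have "s (0 + 0) = s 0 + s 0" by (rule lin_add(1)[OF lin])
      then show "0 \<in> ?T" by simp
    next
      fix x y assume "x \<in> ?T" "y \<in> ?T"
      then show "x + y \<in> ?T" using lin_add(1)[OF lin, of x y] by simp
    next
      fix c x assume "x \<in> ?T"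
      then show "scale c x \<in> ?T" using lin_add(2)[OF lin, of c x]
        by (simp add: ext_scale_def)
    qed
    have "{br a b | a b. True} \<subseteq> ?T"
      using hb by (auto simp: ext_br_def)
    then have "V.span {br a b | a b. True} \<subseteq> ?T" using V.span_minimal sub by blast
    then have z: "\<And>x. snd (s x) = 0" using assms(5) unfolding perfect_lie_def by auto
    show "\<chi> = (\<lambda>_. 0)"
    proof
      fix a
      have "snd (s (pm a)) = \<chi> a ^ p + snd (s a) ^ p" using hp[of a] fs by (simp add: ext_pm_def)
      then have "\<chi> a ^ p = 0" using z p0 by (simp add: zero_power)
      then show "\<chi> a = 0" by simp
    qed
  next
    assume chi: "\<chi> = (\<lambda>_. 0)"
    let ?s = "\<lambda>a. (a, 0::'k)"
    have "Vector_Spaces.linear scale (ext_scale scale) ?s"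
      unfolding Vector_Spaces.linear_def module_hom_def module_hom_axioms_def
      using vs vs_ext[OF vs] by (auto simp: ext_scale_def vector_space_def module_def)
    moreover have "\<forall>a b. ?s (br a b) = ext_br br (?s a) (?s b)" by (simp add: ext_br_def)
    moreover have "\<forall>a. ?s (pm a) = ext_pm pm \<chi> p (?s a)" using chi p0 by (simp add: ext_pm_def)
    ultimately show "\<exists>s. restricted_lie_hom scale br pm (ext_scale scale) (ext_br br) (ext_pm pm \<chi> p) s
              \<and> (\<forall>a. fst (s a) = a)"
      unfolding restricted_lie_hom_def by (intro exI[of _ ?s]) simp
  qed
qed

end
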